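(* Let $\mathcal{G}$ be a Garside groupoid and $x$ an object of $\mathcal{G}$. Let $C_1,C_2,C_3$ be pairwise intersecting cells in $\mathcal{G}_{x\to}$. Then there is a cell $C\subseteq\mathcal{G}_{x\to}$ containing $(C_1\cap C_2)\cup(C_2\cap C_3)\cup(C_3\cap C_1)$.
   Context: Arrows compose like paths. A Garside category is a small category $\mathcal{C}$ with an automorphism $\phi$ and a natural transformation $\Delta$ from the identity functor to $\phi$ (components $\Delta_y\colon y\to\phi(y)$) such that $\mathcal{C}$ is cancellative and homogeneous (admits an additive length function vanishing exactly on identities), every atom (non-identity morphism not a product of two non-identity ones) is simple ($f\colon y\to z$ is simple if $ff^*=\Delta_y$ for some $f^*\colon z\to\phi(y)$), and for each object the morphisms with that source (resp. target) form a lattice under $\preccurlyeq$ (resp. $\succcurlyeq$). The Garside groupoid $\mathcal{G}$ is the enveloping groupoid of $\mathcal{C}$; $\phi,\Delta$ extend to $\mathcal{G}$. For morphisms $f,g$ of $\mathcal{G}$, $f\preccurlyeq g$ means $g=fz$ with $z$ a morphism of $\mathcal{C}$. $\mathcal{G}_{x\to}$ is the set of morphisms of $\mathcal{G}$ with source $x$; it is a lattice under $\preccurlyeq$. A cell in $\mathcal{G}_{x\to}$ is an interval $[f,f\Delta_{t(f)}]=\{g: f\preccurlyeq g\preccurlyeq f\Delta_{t(f)}\}$, where $t(f)$ is the target of $f$. *)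

theory Defs
  imports Main
begin

text \<open>A groupoid is given by its object type 'o, its morphism type 'm, source and
target maps, a composition cmp f g (defined when tgt f = src g; written in
path order: first f then g) and identities.  A Garside groupoid is modelled as
a groupoid G together with a subcategory C (a set of morphisms of G) which is a
Garside category (with automorphism phi = (phio, phim) and natural
transformation Delta) and which generates G as a groupoid.\<close>

definition is_groupoid ::
  "('m \<Rightarrow> 'o) \<Rightarrow> ('m \<Rightarrow> 'o) \<Rightarrow> ('m \<Rightarrow> 'm \<Rightarrow> 'm) \<Rightarrow> ('o \<Rightarrow> 'm) \<Rightarrow> bool" where
  "is_groupoid src tgt cmp idt \<longleftrightarrow>
     (\<forall>x. src (idt x) = x \<and> tgt (idt x) = x) \<and>
     (\<forall>f g. tgt f = src g \<longrightarrow> src (cmp f g) = src f \<and> tgt (cmp f g) = tgt g) \<and>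
     (\<forall>f g h. tgt f = src g \<longrightarrow> tgt g = src h \<longrightarrow> cmp (cmp f g) h = cmp f (cmp g h)) \<and>
     (\<forall>f. cmp (idt (src f)) f = f \<and> cmp f (idt (tgt f)) = f) \<and>
     (\<forall>f. \<exists>g. src g = tgt f \<and> tgt g = src f \<and> cmp f g = idt (src f) \<and> cmp g f = idt (tgt f))"

inductive_set gen_groupoid ::
  "('m \<Rightarrow> 'o) \<Rightarrow> ('m \<Rightarrow> 'o) \<Rightarrow> ('m \<Rightarrow> 'm \<Rightarrow> 'm) \<Rightarrow> ('o \<Rightarrow> 'm) \<Rightarrow> 'm set \<Rightarrow> 'm set"
  for src tgt cmp idt C where
  gen_base: "c \<in> C \<Longrightarrow> c \<in> gen_groupoid src tgt cmp idt C"
| gen_inv: "c \<in> C \<Longrightarrow> src d = tgt c \<Longrightarrow> tgt d = src c \<Longrightarrow> cmp c d = idt (src c) \<Longrightarrow>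
            cmp d c = idt (tgt c) \<Longrightarrow> d \<in> gen_groupoid src tgt cmp idt C"
| gen_comp: "f \<in> gen_groupoid src tgt cmp idt C \<Longrightarrow> g \<in> gen_groupoid src tgt cmp idt C \<Longrightarrow>
            tgt f = src g \<Longrightarrow> cmp f g \<in> gen_groupoid src tgt cmp idt C"

definition ldiv :: "('m \<Rightarrow> 'o) \<Rightarrow> ('m \<Rightarrow> 'o) \<Rightarrow> ('m \<Rightarrow> 'm \<Rightarrow> 'm) \<Rightarrow> 'm set \<Rightarrow> 'm \<Rightarrow> 'm \<Rightarrow> bool" where
  "ldiv src tgt cmp C f g \<longleftrightarrow> (\<exists>z\<in>C. src z = tgt f \<and> g = cmp f z)"

definition rdiv :: "('m \<Rightarrow> 'o) \<Rightarrow> ('m \<Rightarrow> 'o) \<Rightarrow> ('m \<Rightarrow> 'm \<Rightarrow> 'm) \<Rightarrow> 'm set \<Rightarrow> 'm \<Rightarrow> 'm \<Rightarrow> bool" where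
  "rdiv src tgt cmp C f g \<longleftrightarrow> (\<exists>z\<in>C. tgt z = src g \<and> f = cmp z g)"

definition is_lattice_on :: "'a set \<Rightarrow> ('a \<Rightarrow> 'a \<Rightarrow> bool) \<Rightarrow> bool" where
  "is_lattice_on S le \<longleftrightarrow>
     (\<forall>a\<in>S. le a a) \<and>
     (\<forall>a\<in>S. \<forall>b\<in>S. \<forall>c\<in>S. le a b \<longrightarrow> le b c \<longrightarrow> le a c) \<and>
     (\<forall>a\<in>S. \<forall>b\<in>S. le a b \<longrightarrow> le b a \<longrightarrow> a = b) \<and>
     (\<forall>a\<in>S. \<forall>b\<in>S. \<exists>j\<in>S. le a j \<and> le b j \<and> (\<forall>u\<in>S. le a u \<longrightarrow> le b u \<longrightarrow> le j u)) \<and>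
     (\<forall>a\<in>S. \<forall>b\<in>S. \<exists>m\<in>S. le m a \<and> le m b \<and> (\<forall>u\<in>S. le u a \<longrightarrow> le u b \<longrightarrow> le u m))"

definition is_identity :: "('m \<Rightarrow> 'o) \<Rightarrow> ('o \<Rightarrow> 'm) \<Rightarrow> 'm \<Rightarrow> bool" where
  "is_identity src idt f \<longleftrightarrow> f = idt (src f)"

definition is_atom ::
  "('m \<Rightarrow> 'o) \<Rightarrow> ('m \<Rightarrow> 'o) \<Rightarrow> ('m \<Rightarrow> 'm \<Rightarrow> 'm) \<Rightarrow> ('o \<Rightarrow> 'm) \<Rightarrow> 'm set \<Rightarrow> 'm \<Rightarrow> bool" where
  "is_atom src tgt cmp idt C f \<longleftrightarrow> f \<in> C \<and> \<not> is_identity src idt f \<and>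
     \<not> (\<exists>g\<in>C. \<exists>h\<in>C. tgt g = src h \<and> f = cmp g h \<and>
          \<not> is_identity src idt g \<and> \<not> is_identity src idt h)"

definition is_simple ::
  "('m \<Rightarrow> 'o) \<Rightarrow> ('m \<Rightarrow> 'o) \<Rightarrow> ('m \<Rightarrow> 'm \<Rightarrow> 'm) \<Rightarrow> 'm set \<Rightarrow> ('o \<Rightarrow> 'o) \<Rightarrow> ('o \<Rightarrow> 'm) \<Rightarrow> 'm \<Rightarrow> bool" where
  "is_simple src tgt cmp C phio Delta f \<longleftrightarrow> f \<in> C \<and>
     (\<exists>fs\<in>C. src fs = tgt f \<and> tgt fs = phio (src f) \<and> cmp f fs = Delta (src f))"

text \<open>Cancellativity of C is automatic inside G.\<close>
definition garside_groupoid ::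
  "('m \<Rightarrow> 'o) \<Rightarrow> ('m \<Rightarrow> 'o) \<Rightarrow> ('m \<Rightarrow> 'm \<Rightarrow> 'm) \<Rightarrow> ('o \<Rightarrow> 'm) \<Rightarrow> 'm set \<Rightarrow>
   ('o \<Rightarrow> 'o) \<Rightarrow> ('m \<Rightarrow> 'm) \<Rightarrow> ('o \<Rightarrow> 'm) \<Rightarrow> bool" where
  "garside_groupoid src tgt cmp idt C phio phim Delta \<longleftrightarrow>
     is_groupoid src tgt cmp idt \<and>
     \<comment> \<open>C is a subcategory\<close>
     (\<forall>x. idt x \<in> C) \<and>
     (\<forall>f\<in>C. \<forall>g\<in>C. tgt f = src g \<longrightarrow> cmp f g \<in> C) \<and>
     \<comment> \<open>C generates G\<close>
     gen_groupoid src tgt cmp idt C = UNIV \<and>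
     \<comment> \<open>phi is an automorphism of C\<close>
     bij phio \<and>
     bij_betw phim C C \<and>
     (\<forall>f\<in>C. src (phim f) = phio (src f) \<and> tgt (phim f) = phio (tgt f)) \<and>
     (\<forall>x. phim (idt x) = idt (phio x)) \<and>
     (\<forall>f\<in>C. \<forall>g\<in>C. tgt f = src g \<longrightarrow> phim (cmp f g) = cmp (phim f) (phim g)) \<and>
     \<comment> \<open>Delta is a natural transformation from the identity functor to phi\<close>
     (\<forall>y. Delta y \<in> C \<and> src (Delta y) = y \<and> tgt (Delta y) = phio y) \<and>
     (\<forall>f\<in>C. cmp f (Delta (tgt f)) = cmp (Delta (src f)) (phim f)) \<and>
     \<comment> \<open>homogeneity\<close>
     (\<exists>len :: 'm \<Rightarrow> nat.
        (\<forall>f\<in>C. \<forall>g\<in>C. tgt f = src g \<longrightarrow> len (cmp f g) = len f + len g) \<and>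
        (\<forall>f\<in>C. len f = 0 \<longleftrightarrow> is_identity src idt f)) \<and>
     \<comment> \<open>every atom is simple\<close>
     (\<forall>f. is_atom src tgt cmp idt C f \<longrightarrow> is_simple src tgt cmp C phio Delta f) \<and>
     \<comment> \<open>lattice conditions\<close>
     (\<forall>y. is_lattice_on {f\<in>C. src f = y} (ldiv src tgt cmp C)) \<and>
     (\<forall>y. is_lattice_on {f\<in>C. tgt f = y} (rdiv src tgt cmp C))"

definition cell ::
  "('m \<Rightarrow> 'o) \<Rightarrow> ('m \<Rightarrow> 'o) \<Rightarrow> ('m \<Rightarrow> 'm \<Rightarrow> 'm) \<Rightarrow> 'm set \<Rightarrow> ('o \<Rightarrow> 'm) \<Rightarrow> 'o \<Rightarrow> 'm set \<Rightarrow> bool" where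
  "cell src tgt cmp C Delta x A \<longleftrightarrow>
     (\<exists>f. src f = x \<and>
        A = {g. src g = x \<and> ldiv src tgt cmp C f g \<and>
                ldiv src tgt cmp C g (cmp f (Delta (tgt f)))})"

end

theory Submission
  imports Defs
begin

locale gg =
  fixes src :: "'m \<Rightarrow> 'o" and tgt :: "'m \<Rightarrow> 'o" and cmp :: "'m \<Rightarrow> 'm \<Rightarrow> 'm" and idt :: "'o \<Rightarrow> 'm"
    and C :: "'m set" and phio :: "'o \<Rightarrow> 'o" and phim :: "'m \<Rightarrow> 'm" and Delta :: "'o \<Rightarrow> 'm"
  assumes gar: "garside_groupoid src tgt cmp idt C phio phim Delta"
begin

abbreviation le where "le \<equiv> ldiv src tgt cmp C"
definition dl where "dl a = cmp a (Delta (tgt a))"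

lemma grp: "is_groupoid src tgt cmp idt" using gar unfolding garside_groupoid_def by blast
lemma src_idt[simp]: "src (idt y) = y" using grp unfolding is_groupoid_def by blast
lemma tgt_idt[simp]: "tgt (idt y) = y" using grp unfolding is_groupoid_def by blast
lemma src_cmp[simp]: "tgt f = src g \<Longrightarrow> src (cmp f g) = src f" using grp unfolding is_groupoid_def by blast
lemma tgt_cmp[simp]: "tgt f = src g \<Longrightarrow> tgt (cmp f g) = tgt g" using grp unfolding is_groupoid_def by blast
lemma assoc: "tgt f = src g \<Longrightarrow> tgt g = src h \<Longrightarrow> cmp (cmp f g) h = cmp f (cmp g h)"
  using grp unfolding is_groupoid_def by blast
lemma idl[simp]: "cmp (idt (src f)) f = f" using grp unfolding is_groupoid_def by blast
lemma idr[simp]: "cmp f (idt (tgt f)) = f" using grp unfolding is_groupoid_def by blast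
lemma inv: "\<exists>g. src g = tgt f \<and> tgt g = src f \<and> cmp f g = idt (src f) \<and> cmp g f = idt (tgt f)"
  using grp unfolding is_groupoid_def by blast
lemma idt_C: "idt y \<in> C" using gar unfolding garside_groupoid_def by blast
lemma cmp_C: "f \<in> C \<Longrightarrow> g \<in> C \<Longrightarrow> tgt f = src g \<Longrightarrow> cmp f g \<in> C"
  using gar unfolding garside_groupoid_def by blast
lemma bij_phio: "bij phio" using gar unfolding garside_groupoid_def by blast
lemma bij_phim: "bij_betw phim C C" using gar unfolding garside_groupoid_def by blast
lemma phim_src: "f \<in> C \<Longrightarrow> src (phim f) = phio (src f)" using gar unfolding garside_groupoid_def by blast
lemma D_C: "Delta y \<in> C" using gar unfolding garside_groupoid_def by blast
lemma src_D[simp]: "src (Delta y) = y" using gar unfolding garside_groupoid_def by blast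
lemma tgt_D[simp]: "tgt (Delta y) = phio y" using gar unfolding garside_groupoid_def by blast
lemma nat: "f \<in> C \<Longrightarrow> cmp f (Delta (tgt f)) = cmp (Delta (src f)) (phim f)"
  using gar unfolding garside_groupoid_def by blast
lemma lat: "is_lattice_on {f\<in>C. src f = y} le" using gar unfolding garside_groupoid_def by blast

lemma lcancel: assumes "tgt f = src g" "tgt f = src g'" "cmp f g = cmp f g'" shows "g = g'"
proof -
  obtain i where i: "src i = tgt f" "tgt i = src f" "cmp f i = idt (src f)" "cmp i f = idt (tgt f)"
    using inv by blast
  have *: "cmp i (cmp f h) = h" if "tgt f = src h" for h
    using that i assoc[of i f h] by (metis idl)
  show ?thesis using *[OF assms(1)] *[OF assms(2)] assms(3) by metis
qed

lemma rcancel: assumes "tgt f = src g" "tgt f' = src g" "cmp f g = cmp f' g" shows "f = f'"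
proof -
  obtain i where i: "src i = tgt g" "tgt i = src g" "cmp g i = idt (src g)" "cmp i g = idt (tgt g)"
    using inv by blast
  have *: "cmp (cmp h g) i = h" if "tgt h = src g" for h
    using that i assoc[of h g i] by (metis idr)
  show ?thesis using *[OF assms(1)] *[OF assms(2)] assms(3) by metis
qed

lemma tgt_dl[simp]: "tgt (dl a) = phio (tgt a)" by (simp add: dl_def)
lemma src_dl[simp]: "src (dl a) = src a" by (simp add: dl_def)
lemma dl_C: "a \<in> C \<Longrightarrow> dl a \<in> C" by (simp add: dl_def cmp_C D_C)

lemma le_refl: "le a a" unfolding ldiv_def by (rule bexI[of _ "idt (tgt a)"]) (auto simp: idt_C)
lemma le_trans: "le a b \<Longrightarrow> le b c \<Longrightarrow> le a c"
  unfolding ldiv_def by (metis assoc cmp_C src_cmp tgt_cmp)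
lemma le_src: "le a b \<Longrightarrow> src b = src a" unfolding ldiv_def by auto
lemma le_dl: "le a (dl a)" unfolding ldiv_def dl_def using D_C[of "tgt a"] by (intro bexI[of _ "Delta (tgt a)"]) simp_all

lemma dl_cmp: "tgt p = src a \<Longrightarrow> dl (cmp p a) = cmp p (dl a)"
  unfolding dl_def by (simp add: assoc)

lemma le_transfer: assumes "src a = tgt p" "src b = tgt p" shows "le (cmp p a) (cmp p b) \<longleftrightarrow> le a b"
proof
  assume "le (cmp p a) (cmp p b)"
  then obtain z where z: "z \<in> C" "src z = tgt (cmp p a)" "cmp p b = cmp (cmp p a) z"
    unfolding ldiv_def by blast
  have "cmp p b = cmp p (cmp a z)" using z assms by (simp add: assoc)
  hence "b = cmp a z" using lcancel assms z by simp
  thus "le a b" using z assms unfolding ldiv_def by auto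
next
  assume "le a b"
  then obtain z where z: "z \<in> C" "src z = tgt a" "b = cmp a z" unfolding ldiv_def by blast
  thus "le (cmp p a) (cmp p b)" using assms unfolding ldiv_def by (auto simp: assoc)
qed

lemma le_dl_mono: assumes "le a c" shows "le (dl a) (dl c)"
proof -
  obtain z where z: "z \<in> C" "src z = tgt a" "c = cmp a z" using assms unfolding ldiv_def by blast
  have "dl c = cmp a (cmp z (Delta (tgt z)))" using z by (simp add: dl_def assoc)
  also have "\<dots> = cmp a (cmp (Delta (tgt a)) (phim z))" using nat[OF z(1)] z by simp
  also have "\<dots> = cmp (dl a) (phim z)" using z phim_src by (simp add: dl_def assoc)
  moreover have "phim z \<in> C" using z bij_phim by (auto simp: bij_betw_def)
  ultimately show ?thesis unfolding ldiv_def using z phim_src by (intro bexI[of _ "phim z"]) auto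
qed

lemma dl_refl: assumes "le (dl h) (dl k)" shows "le h k"
proof -
  obtain w where w: "w \<in> C" "src w = phio (tgt h)" "dl k = cmp (dl h) w"
    using assms unfolding ldiv_def by auto
  obtain v where v: "v \<in> C" "w = phim v" using w bij_phim by (auto simp: bij_betw_def)
  have sv: "src v = tgt h" using w v phim_src bij_phio by (metis bij_pointE)
  have "dl k = cmp h (cmp (Delta (tgt h)) (phim v))" using w v sv phim_src by (simp add: dl_def assoc)
  also have "\<dots> = cmp h (cmp v (Delta (tgt v)))" using nat[OF v(1)] sv by simp
  also have "\<dots> = cmp (cmp h v) (Delta (tgt v))" using sv by (simp add: assoc)
  finally have e: "cmp k (Delta (tgt k)) = cmp (cmp h v) (Delta (tgt v))" by (simp add: dl_def)
  have "phio (tgt k) = phio (tgt v)" using arg_cong[OF e, of tgt] sv by simp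
  hence tk: "tgt k = tgt v" using bij_phio by (metis bij_pointE)
  have "k = cmp h v" using rcancel[of k "Delta (tgt k)" "cmp h v"] e tk sv by simp
  thus ?thesis unfolding ldiv_def using v sv by auto
qed

lemma dl_pre: "\<exists>h. src h = src u \<and> dl h = u"
proof -
  obtain z where z: "phio z = tgt u" using bij_phio by (metis bij_pointE)
  obtain e where e: "src e = tgt (Delta z)" "tgt e = src (Delta z)" "cmp e (Delta z) = idt (tgt (Delta z))"
    using inv[of "Delta z"] by blast
  have "dl (cmp u e) = cmp (cmp u e) (Delta z)" using e z by (simp add: dl_def)
  also have "\<dots> = u" using e z by (simp add: assoc)
  finally show ?thesis using e z by (intro exI[of _ "cmp u e"]) simp
qed


lemma pair_case:
  assumes "ai \<in> C" "aj \<in> C" "src ai = tgt p" "src aj = tgt p"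
    "le (cmp p ai) g" "le g (dl (cmp p ai))" "le (cmp p aj) g" "le g (dl (cmp p aj))"
  shows "\<exists>b\<in>C. src b = tgt p \<and> g = cmp p b \<and> le ai b \<and> le aj b \<and> le b (dl ai) \<and> le b (dl aj)"
proof -
  obtain z where z: "z \<in> C" "src z = tgt (cmp p ai)" "g = cmp (cmp p ai) z"
    using assms(5) unfolding ldiv_def by blast
  define b where "b = cmp ai z"
  have bC: "b \<in> C" using z assms cmp_C b_def by simp
  have sb: "src b = tgt p" using z assms b_def by simp
  have gb: "g = cmp p b" using z assms b_def by (simp add: assoc)
  have 1: "le ai b" unfolding ldiv_def b_def using z assms by auto
  have 2: "le aj b" using assms(7) gb le_transfer assms(4) sb by simp
  have 3: "le b (dl ai)" using assms(6) gb dl_cmp[of p ai] assms(3) le_transfer[of b p "dl ai"] sb by simp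
  have 4: "le b (dl aj)" using assms(8) gb dl_cmp[of p aj] assms(4) le_transfer[of b p "dl aj"] sb by simp
  show ?thesis using bC sb gb 1 2 3 4 by blast
qed

lemma main:
  assumes "cell src tgt cmp C Delta x C1"
    and "cell src tgt cmp C Delta x C2"
    and "cell src tgt cmp C Delta x C3"
    and "C1 \<inter> C2 \<noteq> {}" and "C2 \<inter> C3 \<noteq> {}" and "C3 \<inter> C1 \<noteq> {}"
  shows "\<exists>A. cell src tgt cmp C Delta x A \<and> (C1 \<inter> C2) \<union> (C2 \<inter> C3) \<union> (C3 \<inter> C1) \<subseteq> A"
proof -
  obtain f1 where f1: "src f1 = x" "C1 = {g. src g = x \<and> le f1 g \<and> le g (dl f1)}"
    using assms(1) unfolding cell_def dl_def by blast
  obtain f2 where f2: "src f2 = x" "C2 = {g. src g = x \<and> le f2 g \<and> le g (dl f2)}"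
    using assms(2) unfolding cell_def dl_def by blast
  obtain f3 where f3: "src f3 = x" "C3 = {g. src g = x \<and> le f3 g \<and> le g (dl f3)}"
    using assms(3) unfolding cell_def dl_def by blast
  have l21: "le f2 (dl f1)" using assms(4) f1 f2 le_trans by blast
  have l23: "le f2 (dl f3)" using assms(5) f3 f2 le_trans by blast
  obtain p where p: "src p = src f2" "dl p = f2" using dl_pre by blast
  have p1: "le p f1" using dl_refl l21 p by simp
  have p3: "le p f3" using dl_refl l23 p by simp
  have p2: "le p f2" using le_dl p by metis
  define y where "y = tgt p"
  define S where "S = {f\<in>C. src f = y}"
  obtain a1 where a1: "a1 \<in> C" "src a1 = y" "f1 = cmp p a1" using p1 unfolding ldiv_def y_def by blast
  obtain a2 where a2: "a2 \<in> C" "src a2 = y" "f2 = cmp p a2" using p2 unfolding ldiv_def y_def by blast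
  obtain a3 where a3: "a3 \<in> C" "src a3 = y" "f3 = cmp p a3" using p3 unfolding ldiv_def y_def by blast
  have L: "is_lattice_on S le" using lat S_def by simp
  have JN: "\<exists>j\<in>S. le a j \<and> le b j \<and> (\<forall>w\<in>S. le a w \<longrightarrow> le b w \<longrightarrow> le j w)" if "a \<in> S" "b \<in> S" for a b
    using L that unfolding is_lattice_on_def by blast
  have MT: "\<exists>m\<in>S. le m a \<and> le m b \<and> (\<forall>w\<in>S. le w a \<longrightarrow> le w b \<longrightarrow> le w m)" if "a \<in> S" "b \<in> S" for a b
    using L that unfolding is_lattice_on_def by blast
  have aS: "a1 \<in> S" "a2 \<in> S" "a3 \<in> S" using a1 a2 a3 S_def by auto
  obtain j12 where j12: "j12 \<in> S" "le a1 j12" "le a2 j12" "\<forall>w\<in>S. le a1 w \<longrightarrow> le a2 w \<longrightarrow> le j12 w"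
    using JN aS by blast
  obtain j23 where j23: "j23 \<in> S" "le a2 j23" "le a3 j23" "\<forall>w\<in>S. le a2 w \<longrightarrow> le a3 w \<longrightarrow> le j23 w"
    using JN aS by blast
  obtain j31 where j31: "j31 \<in> S" "le a3 j31" "le a1 j31" "\<forall>w\<in>S. le a3 w \<longrightarrow> le a1 w \<longrightarrow> le j31 w"
    using JN aS by blast
  have dS: "dl j \<in> S" if "j \<in> S" for j using that dl_C S_def by auto
  obtain m0 where m0: "m0 \<in> S" "le m0 (dl j12)" "le m0 (dl j23)"
    "\<forall>w\<in>S. le w (dl j12) \<longrightarrow> le w (dl j23) \<longrightarrow> le w m0"
    using MT[OF dS[OF j12(1)] dS[OF j23(1)]] by blast
  obtain u where u: "u \<in> S" "le u m0" "le u (dl j31)"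
    "\<forall>w\<in>S. le w m0 \<longrightarrow> le w (dl j31) \<longrightarrow> le w u"
    using MT[OF m0(1) dS[OF j31(1)]] by blast
  have u12: "le u (dl j12)" and u23: "le u (dl j23)" using u m0 le_trans by blast+
  have uG: "le w u" if "w \<in> S" "le w (dl j12)" "le w (dl j23)" "le w (dl j31)" for w
    using that u m0 by blast
  obtain h' where h': "src h' = src u" "dl h' = u" using dl_pre by blast
  have sh': "src h' = y" using h' u S_def by simp
  define h where "h = cmp p h'"
  have sh: "src h = x" using h_def sh' y_def p f2 by simp
  have dlh: "dl h = cmp p u" using h_def dl_cmp sh' y_def h' by simp
  have K: "src g = x \<and> le h g \<and> le g (dl h)"
    if H: "ai \<in> S" "aj \<in> S" "le (cmp p ai) g" "le g (dl (cmp p ai))" "le (cmp p aj) g" "le g (dl (cmp p aj))"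
      "j \<in> S" "\<forall>w\<in>S. le ai w \<longrightarrow> le aj w \<longrightarrow> le j w" "le u (dl j)"
      "\<forall>J\<in>{j12,j23,j31}. le ai J \<or> le aj J" for ai aj g j
  proof -
    obtain b where b: "b \<in> C" "src b = y" "g = cmp p b" "le ai b" "le aj b" "le b (dl ai)" "le b (dl aj)"
      using pair_case[of ai aj p g] H(1-6) S_def y_def by auto
    have bS: "b \<in> S" using b S_def by simp
    have "le j b" using H(8) bS b by blast
    moreover have "le h' j" using dl_refl H(9) h' by simp
    ultimately have "le h' b" using le_trans by blast
    hence 1: "le h g" using le_transfer[of h' p b] sh' b y_def h_def by simp
    have "le b (dl J)" if "J \<in> {j12,j23,j31}" for J
      using \<open>\<forall>J\<in>{j12,j23,j31}. le ai J \<or> le aj J\<close> that b le_dl_mono le_trans by blast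
    hence "le b u" using uG bS by simp
    hence 2: "le g (dl h)" using le_transfer[of b p u] b dlh y_def u S_def by simp
    have "src g = x" using b y_def p f2 by simp
    thus ?thesis using 1 2 by simp
  qed
  have "(C1 \<inter> C2) \<union> (C2 \<inter> C3) \<union> (C3 \<inter> C1) \<subseteq> {g. src g = x \<and> le h g \<and> le g (dl h)}"
  proof
    fix g assume "g \<in> (C1 \<inter> C2) \<union> (C2 \<inter> C3) \<union> (C3 \<inter> C1)"
    then consider "g \<in> C1 \<inter> C2" | "g \<in> C2 \<inter> C3" | "g \<in> C3 \<inter> C1" by blast
    then show "g \<in> {g. src g = x \<and> le h g \<and> le g (dl h)}"
    proof cases
      case 1
      then show ?thesis using K[of a1 a2 g j12] aS j12 u12 f1 f2 a1 a2 j23 j31 by auto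
    next
      case 2
      then show ?thesis using K[of a2 a3 g j23] aS j23 u23 f3 f2 a3 a2 j12 j31 by auto
    next
      case 3
      then show ?thesis using K[of a3 a1 g j31] aS j31 u f3 f1 a3 a1 j12 j23 by auto
    qed
  qed
  moreover have "cell src tgt cmp C Delta x {g. src g = x \<and> le h g \<and> le g (dl h)}"
    unfolding cell_def dl_def using sh by blast
  ultimately show ?thesis by blast
qed

end

theorem lemma4p8:
  fixes src tgt :: "'m \<Rightarrow> 'o" and cmp :: "'m \<Rightarrow> 'm \<Rightarrow> 'm" and idt :: "'o \<Rightarrow> 'm"
    and C :: "'m set" and phio :: "'o \<Rightarrow> 'o" and phim :: "'m \<Rightarrow> 'm" and Delta :: "'o \<Rightarrow> 'm"
    and x :: 'o and C1 C2 C3 :: "'m set"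
  assumes "garside_groupoid src tgt cmp idt C phio phim Delta"
    and "cell src tgt cmp C Delta x C1"
    and "cell src tgt cmp C Delta x C2"
    and "cell src tgt cmp C Delta x C3"
    and "C1 \<inter> C2 \<noteq> {}" and "C2 \<inter> C3 \<noteq> {}" and "C3 \<inter> C1 \<noteq> {}"
  shows "\<exists>A. cell src tgt cmp C Delta x A \<and> (C1 \<inter> C2) \<union> (C2 \<inter> C3) \<union> (C3 \<inter> C1) \<subseteq> A"
  using gg.main[OF gg.intro[OF assms(1)] assms(2-7)] .

end
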